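(* Let $d\geq 2$ and let $\rho$ be a diagonal symmetric (DS) state acting on $\mathbb{C}^d\otimes\mathbb{C}^d$, with associated matrix $M(\rho)$. Then $\rho$ is PPT (i.e. its partial transpose $\rho^{T_B}$ is positive semidefinite) if and only if $M(\rho)$ is doubly non-negative.
   Context: Let $\{\ket{0},\dots,\ket{d-1}\}$ be the computational basis of $\mathbb{C}^d$. Define $\ket{D_{ii}}=\ket{ii}$ and, for $i<j$, $\ket{D_{ij}}=(\ket{ij}+\ket{ji})/\sqrt{2}$. A state $\rho$ on $\mathbb{C}^d\otimes\mathbb{C}^d$ is diagonal symmetric (DS) if $\rho=\sum_{0\le i\le j<d}p_{ij}\ket{D_{ij}}\bra{D_{ij}}$ with $p_{ij}\ge 0$ and $\sum_{i\le j}p_{ij}=1$; set $p_{ji}=p_{ij}$. Its associated matrix $M(\rho)$ is the real symmetric $d\times d$ matrix with $M(\rho)_{ii}=p_{ii}$ and $M(\rho)_{ij}=p_{ij}/2$ for $i\ne j$. The partial transpose $\rho^{T_B}$ is taken with respect to the computational basis of the second factor. A real symmetric matrix $A$ is doubly non-negative if $A\succeq 0$ and all its entries are non-negative. *)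

theory Defs
  imports Complex_Main
begin

text \<open>Vectors on C^d (x) C^d are functions on index pairs (i,j), i,j < d, where (i,j)
  stands for the computational basis vector |ij>. Operators are kernels
  (nat \<times> nat) \<Rightarrow> (nat \<times> nat) \<Rightarrow> complex, entry ((i,j),(k,l)) = <ij| A |kl>.\<close>

definition idx :: "nat \<Rightarrow> (nat \<times> nat) set" where
  "idx d = {0..<d} \<times> {0..<d}"

definition ket2 :: "nat \<Rightarrow> nat \<Rightarrow> (nat \<times> nat) \<Rightarrow> complex" where
  "ket2 i j = (\<lambda>x. if x = (i, j) then 1 else 0)"

definition Dket :: "nat \<Rightarrow> nat \<Rightarrow> (nat \<times> nat) \<Rightarrow> complex" where
  "Dket i j = (if i = j then ket2 i i
               else (\<lambda>x. (ket2 i j x + ket2 j i x) / complex_of_real (sqrt 2)))"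

definition outer :: "((nat \<times> nat) \<Rightarrow> complex) \<Rightarrow> ((nat \<times> nat) \<Rightarrow> complex)
    \<Rightarrow> (nat \<times> nat) \<Rightarrow> (nat \<times> nat) \<Rightarrow> complex" where
  "outer u v = (\<lambda>x y. u x * cnj (v y))"

definition ds_state :: "nat \<Rightarrow> (nat \<Rightarrow> nat \<Rightarrow> real) \<Rightarrow> (nat \<times> nat) \<Rightarrow> (nat \<times> nat) \<Rightarrow> complex" where
  "ds_state d p = (\<lambda>x y. \<Sum>(i, j) \<in> {(i, j). i \<le> j \<and> j < d}.
                      complex_of_real (p i j) * outer (Dket i j) (Dket i j) x y)"

definition ds_weights :: "nat \<Rightarrow> (nat \<Rightarrow> nat \<Rightarrow> real) \<Rightarrow> bool" where
  "ds_weights d p \<longleftrightarrow> (\<forall>i j. i \<le> j \<and> j < d \<longrightarrow> p i j \<ge> 0)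
                      \<and> (\<Sum>(i, j) \<in> {(i, j). i \<le> j \<and> j < d}. p i j) = 1"

definition assoc_matrix :: "(nat \<Rightarrow> nat \<Rightarrow> real) \<Rightarrow> nat \<Rightarrow> nat \<Rightarrow> real" where
  "assoc_matrix p i j = (if i = j then p i i else p (min i j) (max i j) / 2)"

definition partial_transpose :: "((nat \<times> nat) \<Rightarrow> (nat \<times> nat) \<Rightarrow> complex)
    \<Rightarrow> (nat \<times> nat) \<Rightarrow> (nat \<times> nat) \<Rightarrow> complex" where
  "partial_transpose A = (\<lambda>(i, j) (k, l). A (i, l) (k, j))"

definition psd_op :: "nat \<Rightarrow> ((nat \<times> nat) \<Rightarrow> (nat \<times> nat) \<Rightarrow> complex) \<Rightarrow> bool" where
  "psd_op d A \<longleftrightarrow>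
     (\<forall>x\<in>idx d. \<forall>y\<in>idx d. A x y = cnj (A y x)) \<and>
     (\<forall>v :: (nat \<times> nat) \<Rightarrow> complex.
        Re (\<Sum>x\<in>idx d. \<Sum>y\<in>idx d. cnj (v x) * A x y * v y) \<ge> 0)"

definition psd_real :: "nat \<Rightarrow> (nat \<Rightarrow> nat \<Rightarrow> real) \<Rightarrow> bool" where
  "psd_real d A \<longleftrightarrow>
     (\<forall>i<d. \<forall>j<d. A i j = A j i) \<and>
     (\<forall>v :: nat \<Rightarrow> real. (\<Sum>i<d. \<Sum>j<d. v i * A i j * v j) \<ge> 0)"

definition doubly_nonneg :: "nat \<Rightarrow> (nat \<Rightarrow> nat \<Rightarrow> real) \<Rightarrow> bool" where
  "doubly_nonneg d A \<longleftrightarrow> psd_real d A \<and> (\<forall>i<d. \<forall>j<d. A i j \<ge> 0)"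

end

theory Submission imports Defs begin

lemma sum_single: "finite T \<Longrightarrow> m \<in> T \<Longrightarrow> (\<forall>x\<in>T. x\<noteq>m \<longrightarrow> g x = 0) \<Longrightarrow> sum g T = g m"
  by (subst sum.mono_neutral_left[of T "{m}", symmetric]) auto

lemma Dket_zero: "i \<le> j \<Longrightarrow> (i,j) \<noteq> (min a e, max a e) \<Longrightarrow> Dket i j (a,e) = 0"
  unfolding Dket_def ket2_def by (auto simp: min_def max_def split: if_splits)

lemma pt_entry:
  assumes "a<d" "e<d"
  shows "partial_transpose (ds_state d p) (a,b) (c,e) = complex_of_real
     ((if a=b \<and> c=e then assoc_matrix p a c else 0) + (if a=c \<and> b=e \<and> a\<noteq>b then assoc_matrix p a b else 0))"
proof -
  let ?T = "{(i, j). i \<le> j \<and> j < d}"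
  have s2: "complex_of_real (sqrt 2) * complex_of_real (sqrt 2) = 2"
    by (simp flip: of_real_mult)
  have fin: "finite ?T" by (rule finite_subset[of _ "{..<d} \<times> {..<d}"]) auto
  have "partial_transpose (ds_state d p) (a,b) (c,e) =
     (\<Sum>(i,j)\<in>?T. complex_of_real (p i j) * outer (Dket i j) (Dket i j) (a,e) (c,b))"
    by (simp add: partial_transpose_def ds_state_def)
  also have "\<dots> = complex_of_real (p (min a e) (max a e)) * outer (Dket (min a e) (max a e)) (Dket (min a e) (max a e)) (a,e) (c,b)"
    by (subst sum_single[OF fin, where m="(min a e, max a e)"]) (use assms in \<open>auto simp: outer_def Dket_zero\<close>)
  also have "\<dots> = complex_of_real
     ((if a=b \<and> c=e then assoc_matrix p a c else 0) + (if a=c \<and> b=e \<and> a\<noteq>b then assoc_matrix p a b else 0))"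
    using s2 unfolding outer_def Dket_def ket2_def assoc_matrix_def
    by (auto simp: min_def max_def field_simps)
  finally show ?thesis .
qed

lemma inner_sum:
  fixes v :: "nat \<times> nat \<Rightarrow> complex" and M :: "nat \<Rightarrow> nat \<Rightarrow> real"
  assumes "a < d" "b < d"
  shows "(\<Sum>y\<in>idx d. cnj (v (a,b)) * complex_of_real
     ((if a=b \<and> fst y = snd y then M a (fst y) else 0) + (if a=fst y \<and> b=snd y \<and> a\<noteq>b then M a b else 0)) * v y)
   = (if a = b then (\<Sum>c<d. cnj (v (a,a)) * complex_of_real (M a c) * v (c,c)) else 0)
     + (if a \<noteq> b then complex_of_real (M a b) * cnj (v (a,b)) * v (a,b) else 0)"
proof -
  have "(\<Sum>y\<in>idx d. cnj (v (a,b)) * complex_of_real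
     ((if a=b \<and> fst y = snd y then M a (fst y) else 0) + (if a=fst y \<and> b=snd y \<and> a\<noteq>b then M a b else 0)) * v y)
    = (\<Sum>y\<in>idx d. (if a=b \<and> fst y = snd y then cnj (v (a,a)) * complex_of_real (M a (fst y)) * v (fst y, fst y) else 0))
     + (\<Sum>y\<in>idx d. (if y = (a,b) \<and> a\<noteq>b then complex_of_real (M a b) * cnj (v (a,b)) * v (a,b) else 0))"
    by (subst sum.distrib[symmetric], rule sum.cong) (auto simp: algebra_simps)
  also have "(\<Sum>y\<in>idx d. (if y = (a,b) \<and> a\<noteq>b then complex_of_real (M a b) * cnj (v (a,b)) * v (a,b) else 0))
     = (if a \<noteq> b then complex_of_real (M a b) * cnj (v (a,b)) * v (a,b) else 0)"
    using assms by (cases "a = b") (auto simp: idx_def)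
  also have "(\<Sum>y\<in>idx d. (if a=b \<and> fst y = snd y then cnj (v (a,a)) * complex_of_real (M a (fst y)) * v (fst y, fst y) else 0))
     = (if a = b then (\<Sum>c<d. cnj (v (a,a)) * complex_of_real (M a c) * v (c,c)) else 0)"
  proof (cases "a = b")
    case True
    have "(\<Sum>y\<in>idx d. (if fst y = snd y then cnj (v (a,a)) * complex_of_real (M a (fst y)) * v (fst y, fst y) else 0))
       = (\<Sum>c\<in>{0..<d}. \<Sum>e\<in>{0..<d}. (if c = e then cnj (v (a,a)) * complex_of_real (M a c) * v (c, c) else 0))"
      unfolding idx_def by (subst sum.cartesian_product) (auto intro!: sum.cong)
    also have "\<dots> = (\<Sum>c<d. cnj (v (a,a)) * complex_of_real (M a c) * v (c,c))"
      by (simp add: lessThan_atLeast0)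
    finally show ?thesis using True by simp
  qed simp
  finally show ?thesis .
qed


lemma Qform:
  fixes v :: "nat \<times> nat \<Rightarrow> complex"
  shows "(\<Sum>x\<in>idx d. \<Sum>y\<in>idx d. cnj (v x) * partial_transpose (ds_state d p) x y * v y)
    = (\<Sum>a<d. \<Sum>c<d. cnj (v (a,a)) * complex_of_real (assoc_matrix p a c) * v (c,c))
      + (\<Sum>x\<in>idx d. if fst x \<noteq> snd x then complex_of_real (assoc_matrix p (fst x) (snd x)) * cnj (v x) * v x else 0)"
proof -
  let ?M = "assoc_matrix p"
  have "(\<Sum>x\<in>idx d. \<Sum>y\<in>idx d. cnj (v x) * partial_transpose (ds_state d p) x y * v y)
     = (\<Sum>x\<in>idx d. (if fst x = snd x then (\<Sum>c<d. cnj (v (fst x, fst x)) * complex_of_real (?M (fst x) c) * v (c,c)) else 0)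
     + (if fst x \<noteq> snd x then complex_of_real (?M (fst x) (snd x)) * cnj (v x) * v x else 0))"
  proof (rule sum.cong[OF refl])
    fix x assume x: "x \<in> idx d"
    obtain a b where ab: "x = (a,b)" by force
    have abd: "a < d" "b < d" using x ab by (auto simp: idx_def)
    have "(\<Sum>y\<in>idx d. cnj (v x) * partial_transpose (ds_state d p) x y * v y)
      = (\<Sum>y\<in>idx d. cnj (v (a,b)) * complex_of_real
     ((if a=b \<and> fst y = snd y then ?M a (fst y) else 0) + (if a=fst y \<and> b=snd y \<and> a\<noteq>b then ?M a b else 0)) * v y)"
    proof (rule sum.cong[OF refl])
      fix y assume y: "y \<in> idx d"
      obtain c e where ce: "y = (c,e)" by force
      have "e < d" using y ce by (auto simp: idx_def)
      then show "cnj (v x) * partial_transpose (ds_state d p) x y * v y = cnj (v (a,b)) * complex_of_real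
     ((if a=b \<and> fst y = snd y then ?M a (fst y) else 0) + (if a=fst y \<and> b=snd y \<and> a\<noteq>b then ?M a b else 0)) * v y"
        using pt_entry[OF abd(1), of e p b c] ab ce by simp
    qed
    also have "\<dots> = (if a = b then (\<Sum>c<d. cnj (v (a,a)) * complex_of_real (?M a c) * v (c,c)) else 0)
     + (if a \<noteq> b then complex_of_real (?M a b) * cnj (v (a,b)) * v (a,b) else 0)"
      by (rule inner_sum[OF abd])
    finally show "(\<Sum>y\<in>idx d. cnj (v x) * partial_transpose (ds_state d p) x y * v y)
     = (if fst x = snd x then (\<Sum>c<d. cnj (v (fst x, fst x)) * complex_of_real (?M (fst x) c) * v (c,c)) else 0)
     + (if fst x \<noteq> snd x then complex_of_real (?M (fst x) (snd x)) * cnj (v x) * v x else 0)"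
      using ab by simp
  qed
  also have "\<dots> = (\<Sum>x\<in>idx d. (if fst x = snd x then (\<Sum>c<d. cnj (v (fst x, fst x)) * complex_of_real (?M (fst x) c) * v (c,c)) else 0))
     + (\<Sum>x\<in>idx d. if fst x \<noteq> snd x then complex_of_real (?M (fst x) (snd x)) * cnj (v x) * v x else 0)"
    by (rule sum.distrib)
  also have "(\<Sum>x\<in>idx d. (if fst x = snd x then (\<Sum>c<d. cnj (v (fst x, fst x)) * complex_of_real (?M (fst x) c) * v (c,c)) else 0))
     = (\<Sum>a\<in>{0..<d}. \<Sum>b\<in>{0..<d}. (if a = b then (\<Sum>c<d. cnj (v (a, a)) * complex_of_real (?M a c) * v (c,c)) else 0))"
    unfolding idx_def by (subst sum.cartesian_product) (auto intro!: sum.cong)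
  also have "\<dots> = (\<Sum>a<d. \<Sum>c<d. cnj (v (a,a)) * complex_of_real (?M a c) * v (c,c))"
    by (simp add: lessThan_atLeast0)
  finally show ?thesis .
qed


lemma Re_quad:
  fixes u :: "nat \<Rightarrow> complex" and M :: "nat \<Rightarrow> nat \<Rightarrow> real"
  shows "Re (\<Sum>a<d. \<Sum>c<d. cnj (u a) * complex_of_real (M a c) * u c)
    = (\<Sum>a<d. \<Sum>c<d. Re (u a) * M a c * Re (u c)) + (\<Sum>a<d. \<Sum>c<d. Im (u a) * M a c * Im (u c))"
  by (simp add: Re_sum sum.distrib[symmetric] algebra_simps)

lemma M_nonneg:
  assumes "ds_weights d p" "i < d" "j < d"
  shows "assoc_matrix p i j \<ge> 0"
  using assms unfolding ds_weights_def assoc_matrix_def by (auto simp: min_def max_def)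

lemma M_sym: "assoc_matrix p i j = assoc_matrix p j i"
  unfolding assoc_matrix_def by (auto simp: min.commute max.commute)

theorem theorem2:
  fixes d :: nat and p :: "nat \<Rightarrow> nat \<Rightarrow> real"
  assumes "d \<ge> 2"
    and "ds_weights d p"
  shows "psd_op d (partial_transpose (ds_state d p)) \<longleftrightarrow> doubly_nonneg d (assoc_matrix p)"
proof
  assume H: "psd_op d (partial_transpose (ds_state d p))"
  have "psd_real d (assoc_matrix p)"
    unfolding psd_real_def
  proof (intro conjI allI impI)
    fix i j show "assoc_matrix p i j = assoc_matrix p j i" by (rule M_sym)
  next
    fix w :: "nat \<Rightarrow> real"
    define v :: "nat \<times> nat \<Rightarrow> complex" where "v = (\<lambda>x. if fst x = snd x then complex_of_real (w (fst x)) else 0)"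
    have "0 \<le> Re (\<Sum>x\<in>idx d. \<Sum>y\<in>idx d. cnj (v x) * partial_transpose (ds_state d p) x y * v y)"
      using H unfolding psd_op_def by blast
    also have "\<dots> = (\<Sum>a<d. \<Sum>c<d. w a * assoc_matrix p a c * w c)"
    proof -
      have z: "(\<Sum>x\<in>idx d. if fst x \<noteq> snd x then complex_of_real (assoc_matrix p (fst x) (snd x)) * cnj (v x) * v x else 0) = 0"
        by (rule sum.neutral) (simp add: v_def)
      show ?thesis unfolding Qform Re_quad z by (simp add: v_def)
    qed
    finally show "0 \<le> (\<Sum>a<d. \<Sum>c<d. w a * assoc_matrix p a c * w c)" .
  qed
  then show "doubly_nonneg d (assoc_matrix p)"
    unfolding doubly_nonneg_def using M_nonneg[OF assms(2)] by blast
next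
  assume H: "doubly_nonneg d (assoc_matrix p)"
  have P: "\<And>w. 0 \<le> (\<Sum>a<d. \<Sum>c<d. w a * assoc_matrix p a c * w c)"
    using H unfolding doubly_nonneg_def psd_real_def by blast
  show "psd_op d (partial_transpose (ds_state d p))"
    unfolding psd_op_def
  proof (intro conjI ballI allI)
    fix x y assume x: "x \<in> idx d" and y: "y \<in> idx d"
    obtain a b where ab: "x = (a,b)" by force
    obtain c e where ce: "y = (c,e)" by force
    have d: "a < d" "b < d" "c < d" "e < d" using x y ab ce by (auto simp: idx_def)
    show "partial_transpose (ds_state d p) x y = cnj (partial_transpose (ds_state d p) y x)"
      unfolding ab ce pt_entry[OF d(1) d(4)] pt_entry[OF d(3) d(2)]
      by (auto simp: M_sym)
  next
    fix v :: "nat \<times> nat \<Rightarrow> complex"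
    have A: "0 \<le> Re (\<Sum>a<d. \<Sum>c<d. cnj (v (a,a)) * complex_of_real (assoc_matrix p a c) * v (c,c))"
      unfolding Re_quad using P[of "\<lambda>a. Re (v (a,a))"] P[of "\<lambda>a. Im (v (a,a))"] by simp
    have B: "0 \<le> Re (\<Sum>x\<in>idx d. if fst x \<noteq> snd x then complex_of_real (assoc_matrix p (fst x) (snd x)) * cnj (v x) * v x else 0)"
      unfolding Re_sum
    proof (rule sum_nonneg)
      fix x assume x: "x \<in> idx d"
      have "assoc_matrix p (fst x) (snd x) \<ge> 0"
        using M_nonneg[OF assms(2)] x by (auto simp: idx_def)
      then show "0 \<le> Re (if fst x \<noteq> snd x then complex_of_real (assoc_matrix p (fst x) (snd x)) * cnj (v x) * v x else 0)"
        by (simp add: algebra_simps) (metis add_nonneg_nonneg mult.assoc mult_nonneg_nonneg mult.commute zero_le_square)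
    qed
    show "0 \<le> Re (\<Sum>x\<in>idx d. \<Sum>y\<in>idx d. cnj (v x) * partial_transpose (ds_state d p) x y * v y)"
      unfolding Qform using A B by simp
  qed
qed

end
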